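(* Let $\mathcal{S}=\{s_1,\dots,s_N\}$ be a finite state space, $\mathcal{A}$ a finite action space, $\gamma\in(0,1)$, and consider the real MDP $\langle\mathcal{S},\mathcal{A},\mathbb{P},R,\gamma\rangle$ and the DT MDP $\langle\mathcal{S},\mathcal{A},\mathbb{P}',R',\gamma\rangle$. Then $$\max_i\bar d(s_i,s_i)\le\frac{1}{1-\gamma}\max_i d_{\mathrm{TV}}(s_i,s_i).$$
   Context: $\mathbb{P}(\cdot|s,a),\mathbb{P}'(\cdot|s,a)$ are probability distributions on $\mathcal{S}$; $R,R':\mathcal{S}\times\mathcal{A}\to\mathbb{R}$; $R_{\max}=\max_{i,j,a}|R(s_i,a)-R'(s_j,a)|$. For distributions $P,Q$ on $\mathcal{S}$ and a cost $d:\mathcal{S}\times\mathcal{S}\to[0,\infty)$ (not required to vanish on the diagonal; first argument a real-MDP state, second a DT-MDP state), $W_1(P,Q;d)=\min_\Lambda\sum_{i,j}\lambda_{i,j}d(s_i,s_j)$ over nonnegative $N\times N$ matrices with row sums $P(s_i)$ and column sums $Q(s_j)$. Define $d_0\equiv0$, $d_n(s_i,s_j)=\max_a\{|R(s_i,a)-R'(s_j,a)|+\gamma W_1(\mathbb{P}(\cdot|s_i,a),\mathbb{P}'(\cdot|s_j,a);d_{n-1})\}$; the DT bisimulation metric $\bar d$ is the pointwise limit of the nondecreasing sequence $(d_n)$; it takes values in $[0,\frac{R_{\max}}{1-\gamma}]$ and satisfies $\bar d(s_i,s_j)=\max_a\{|R(s_i,a)-R'(s_j,a)|+\gamma W_1(\mathbb{P}(\cdot|s_i,a),\mathbb{P}'(\cdot|s_j,a);\bar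 d)\}$. With $\mathrm{TV}(P,Q)=\frac12\sum_i|P(s_i)-Q(s_i)|$, define $d_{\mathrm{TV}}(s_i,s_i)=\max_a\{|R(s_i,a)-R'(s_i,a)|+\frac{\gamma R_{\max}}{1-\gamma}\mathrm{TV}(\mathbb{P}(\cdot|s_i,a),\mathbb{P}'(\cdot|s_i,a))\}$. *)

theory Defs
  imports "HOL-Analysis.Analysis"
begin

text \<open>States are a finite type 's (the state space S = {s_1,...,s_N}), actions a finite type 'a.
A transition kernel is P :: 's => 'a => 's => real, with P s a s' the probability of s' given (s,a).\<close>

definition stochastic :: "('s::finite \<Rightarrow> 'a \<Rightarrow> 's \<Rightarrow> real) \<Rightarrow> bool" where
  "stochastic P \<longleftrightarrow> (\<forall>s a s'. 0 \<le> P s a s') \<and> (\<forall>s a. (\<Sum>s'\<in>UNIV. P s a s') = 1)"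

definition couplings :: "('s::finite \<Rightarrow> real) \<Rightarrow> ('s \<Rightarrow> real) \<Rightarrow> ('s \<Rightarrow> 's \<Rightarrow> real) set" where
  "couplings p q = {L. (\<forall>i j. 0 \<le> L i j) \<and> (\<forall>i. (\<Sum>j\<in>UNIV. L i j) = p i)
                       \<and> (\<forall>j. (\<Sum>i\<in>UNIV. L i j) = q j)}"

text \<open>Wasserstein-1 distance with (not necessarily diagonal-vanishing) cost d: minimum over couplings
(the minimum is attained; we write it as the infimum).\<close>
definition W1 :: "('s::finite \<Rightarrow> real) \<Rightarrow> ('s \<Rightarrow> real) \<Rightarrow> ('s \<Rightarrow> 's \<Rightarrow> real) \<Rightarrow> real" where
  "W1 p q d = Inf ((\<lambda>L. \<Sum>i\<in>UNIV. \<Sum>j\<in>UNIV. L i j * d i j) ` couplings p q)"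

definition Rmax :: "('s::finite \<Rightarrow> 'a::finite \<Rightarrow> real) \<Rightarrow> ('s \<Rightarrow> 'a \<Rightarrow> real) \<Rightarrow> real" where
  "Rmax R R' = Max {\<bar>R si a - R' sj a\<bar> | si sj a. True}"

fun dseq :: "real \<Rightarrow> ('s::finite \<Rightarrow> 'a::finite \<Rightarrow> 's \<Rightarrow> real) \<Rightarrow> ('s \<Rightarrow> 'a \<Rightarrow> 's \<Rightarrow> real)
    \<Rightarrow> ('s \<Rightarrow> 'a \<Rightarrow> real) \<Rightarrow> ('s \<Rightarrow> 'a \<Rightarrow> real) \<Rightarrow> nat \<Rightarrow> 's \<Rightarrow> 's \<Rightarrow> real" where
  "dseq \<gamma> P P' R R' 0 = (\<lambda>si sj. 0)"
| "dseq \<gamma> P P' R R' (Suc n) = (\<lambda>si sj. Max (range (\<lambda>a.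
      \<bar>R si a - R' sj a\<bar> + \<gamma> * W1 (P si a) (P' sj a) (dseq \<gamma> P P' R R' n))))"

definition dbar :: "real \<Rightarrow> ('s::finite \<Rightarrow> 'a::finite \<Rightarrow> 's \<Rightarrow> real) \<Rightarrow> ('s \<Rightarrow> 'a \<Rightarrow> 's \<Rightarrow> real)
    \<Rightarrow> ('s \<Rightarrow> 'a \<Rightarrow> real) \<Rightarrow> ('s \<Rightarrow> 'a \<Rightarrow> real) \<Rightarrow> 's \<Rightarrow> 's \<Rightarrow> real" where
  "dbar \<gamma> P P' R R' si sj = lim (\<lambda>n. dseq \<gamma> P P' R R' n si sj)"

definition TV :: "('s::finite \<Rightarrow> real) \<Rightarrow> ('s \<Rightarrow> real) \<Rightarrow> real" where
  "TV p q = (1/2) * (\<Sum>s\<in>UNIV. \<bar>p s - q s\<bar>)"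

definition dTV :: "real \<Rightarrow> ('s::finite \<Rightarrow> 'a::finite \<Rightarrow> 's \<Rightarrow> real) \<Rightarrow> ('s \<Rightarrow> 'a \<Rightarrow> 's \<Rightarrow> real)
    \<Rightarrow> ('s \<Rightarrow> 'a \<Rightarrow> real) \<Rightarrow> ('s \<Rightarrow> 'a \<Rightarrow> real) \<Rightarrow> 's \<Rightarrow> real" where
  "dTV \<gamma> P P' R R' si = Max (range (\<lambda>a.
      \<bar>R si a - R' si a\<bar> + \<gamma> * Rmax R R' / (1 - \<gamma>) * TV (P si a) (P' si a)))"

end

theory Submission
  imports Defs
begin

lemma coup_prod:
  fixes p q :: "'s::finite \<Rightarrow> real"
  assumes "\<forall>i. 0 \<le> p i" "\<forall>j. 0 \<le> q j" "sum p UNIV = 1" "sum q UNIV = 1"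
  shows "(\<lambda>i j. p i * q j) \<in> couplings p q"
  unfolding couplings_def using assms
  by (simp add: sum_distrib_left[symmetric] sum_distrib_right[symmetric])

lemma W1_nonneg:
  assumes "couplings p q \<noteq> {}" "\<forall>i j. 0 \<le> d i j"
  shows "0 \<le> W1 p q d"
  unfolding W1_def using assms
  by (intro cInf_greatest) (auto simp: couplings_def intro!: sum_nonneg mult_nonneg_nonneg)

lemma W1_le:
  assumes "L \<in> couplings p q" "\<forall>i j. 0 \<le> d i j"
  shows "W1 p q d \<le> (\<Sum>i\<in>UNIV. \<Sum>j\<in>UNIV. L i j * d i j)"
  unfolding W1_def using assms
  by (intro cInf_lower bdd_belowI[of _ 0])
     (auto simp: couplings_def intro!: sum_nonneg mult_nonneg_nonneg)

lemma W1_mono: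
  assumes "couplings p q \<noteq> {}" "\<forall>i j. 0 \<le> d i j" "\<forall>i j. d i j \<le> d' i j"
  shows "W1 p q d \<le> W1 p q d'"
  unfolding W1_def using assms
  apply (intro cInf_mono bdd_belowI[of _ 0])
    apply (auto simp: couplings_def intro!: sum_nonneg mult_nonneg_nonneg)
  subgoal for x xa
    apply (rule exI[of _ x])
    apply (auto intro!: sum_mono mult_left_mono)
    done
  done

lemma W1_prod_bound:
  fixes p q :: "'s::finite \<Rightarrow> real"
  assumes "\<forall>i. 0 \<le> p i" "\<forall>j. 0 \<le> q j" "sum p UNIV = 1" "sum q UNIV = 1"
    "\<forall>i j. 0 \<le> d i j \<and> d i j \<le> C"
  shows "W1 p q d \<le> C"
proof -
  have "W1 p q d \<le> (\<Sum>i\<in>UNIV. \<Sum>j\<in>UNIV. p i * q j * d i j)"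
    using W1_le[OF coup_prod[OF assms(1-4)]] assms(5) by blast
  also have "\<dots> \<le> (\<Sum>i\<in>UNIV. \<Sum>j\<in>UNIV. p i * q j * C)"
    using assms by (intro sum_mono mult_left_mono) auto
  also have "\<dots> = C"
    using assms(3,4) by (simp add: sum_distrib_left[symmetric] sum_distrib_right[symmetric])
  finally show ?thesis .
qed

lemma W1_max_coup:
  fixes p q :: "'s::finite \<Rightarrow> real"
  assumes p0: "\<forall>i. 0 \<le> p i" and q0: "\<forall>j. 0 \<le> q j"
    and p1: "sum p UNIV = 1" and q1: "sum q UNIV = 1"
    and dC: "\<forall>i j. 0 \<le> d i j \<and> d i j \<le> C" and dM: "\<forall>i. d i i \<le> M" and M0: "0 \<le> M"
  shows "W1 p q d \<le> M + C * TV p q"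
proof -
  define m where "m i = min (p i) (q i)" for i
  define T where "T = (\<Sum>i\<in>UNIV. p i - m i)"
  have d0: "\<forall>i j. 0 \<le> d i j" using dC by blast
  have pm: "0 \<le> p i - m i" for i by (simp add: m_def)
  have qm: "0 \<le> q i - m i" for i by (simp add: m_def)
  have m0: "0 \<le> m i" for i using p0 q0 by (simp add: m_def)
  have prod0: "(p i - m i) * (q i - m i) = 0" for i by (simp add: m_def min_def)
  have Tq: "(\<Sum>i\<in>UNIV. q i - m i) = T"
    unfolding T_def using p1 q1 by (simp add: sum_subtractf)
  have abs_eq: "\<bar>p i - q i\<bar> = (p i - m i) + (q i - m i)" for i
    by (simp add: m_def min_def abs_if)
  have "(\<Sum>i\<in>UNIV. \<bar>p i - q i\<bar>) = (\<Sum>i\<in>UNIV. p i - m i) + (\<Sum>i\<in>UNIV. q i - m i)"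
    unfolding abs_eq by (rule sum.distrib)
  hence TV: "TV p q = T"
    unfolding TV_def using Tq T_def by simp
  have T0: "0 \<le> T" unfolding T_def using pm by (simp add: sum_nonneg)
  have summ: "sum m UNIV \<le> 1" using p1 sum_mono[of UNIV m p] by (simp add: m_def)
  have diag: "(\<Sum>i\<in>UNIV. \<Sum>j\<in>UNIV. (if i = j then m i else 0) * d i j) \<le> M"
  proof -
    have "(\<Sum>i\<in>UNIV. \<Sum>j\<in>UNIV. (if i = j then m i else 0) * d i j) = (\<Sum>i\<in>UNIV. m i * d i i)"
    proof (rule sum.cong[OF refl])
      fix i
      have "(\<Sum>j\<in>UNIV. (if i = j then m i else 0) * d i j) = (\<Sum>j\<in>UNIV. if i = j then m i * d i j else 0)"
        by (rule sum.cong) auto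
      also have "\<dots> = m i * d i i" by (simp add: sum.delta)
      finally show "(\<Sum>j\<in>UNIV. (if i = j then m i else 0) * d i j) = m i * d i i" .
    qed
    also have "\<dots> \<le> (\<Sum>i\<in>UNIV. m i * M)"
      using dM m0 by (intro sum_mono mult_left_mono) auto
    also have "\<dots> = sum m UNIV * M" by (simp add: sum_distrib_right)
    also have "\<dots> \<le> M" using mult_right_mono[OF summ M0] by simp
    finally show ?thesis .
  qed
  show ?thesis
  proof (cases "T = 0")
    case True
    have "\<forall>i\<in>UNIV. p i - m i = 0" using True pm unfolding T_def
      by (subst sum_nonneg_eq_0_iff[symmetric]) auto
    hence pe: "p i = m i" for i by simp
    have "\<forall>i\<in>UNIV. q i - m i = 0" using True Tq qm
      by (subst sum_nonneg_eq_0_iff[symmetric]) auto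
    hence qe: "q i = m i" for i by simp
    define L where "L i j = (if i = j then m i else 0)" for i j :: 's
    have "L \<in> couplings p q"
      unfolding couplings_def L_def using m0 pe qe by auto
    hence "W1 p q d \<le> (\<Sum>i\<in>UNIV. \<Sum>j\<in>UNIV. L i j * d i j)" using W1_le d0 by blast
    also have "\<dots> \<le> M" using diag unfolding L_def .
    finally show ?thesis using TV True by simp
  next
    case False
    hence Tp: "0 < T" using T0 by simp
    define L where "L i j = (if i = j then m i else 0) + (p i - m i) * (q j - m j) / T" for i j :: 's
    have rows: "(\<Sum>j\<in>UNIV. L i j) = p i" for i
    proof -
      have "(\<Sum>j\<in>UNIV. L i j) = m i + (p i - m i) * (\<Sum>j\<in>UNIV. q j - m j) / T"
        unfolding L_def by (simp add: sum.distrib sum_divide_distrib[symmetric] sum_distrib_left[symmetric])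
      also have "\<dots> = p i" using Tq Tp by simp
      finally show ?thesis .
    qed
    have cols: "(\<Sum>i\<in>UNIV. L i j) = q j" for j
    proof -
      have "(\<Sum>i\<in>UNIV. L i j) = m j + (\<Sum>i\<in>UNIV. p i - m i) * (q j - m j) / T"
        unfolding L_def by (simp add: sum.distrib sum_divide_distrib[symmetric] sum_distrib_right[symmetric])
      also have "\<dots> = q j" using Tp unfolding T_def[symmetric] by simp
      finally show ?thesis .
    qed
    have "L \<in> couplings p q"
      unfolding couplings_def using rows cols m0 pm qm Tp
      by (auto simp: L_def intro!: add_nonneg_nonneg divide_nonneg_pos mult_nonneg_nonneg)
    hence "W1 p q d \<le> (\<Sum>i\<in>UNIV. \<Sum>j\<in>UNIV. L i j * d i j)" using W1_le d0 by blast
    also have "\<dots> = (\<Sum>i\<in>UNIV. \<Sum>j\<in>UNIV. (if i = j then m i else 0) * d i j)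
        + (\<Sum>i\<in>UNIV. \<Sum>j\<in>UNIV. (p i - m i) * (q j - m j) / T * d i j)"
      unfolding L_def by (simp add: distrib_right sum.distrib)
    also have "\<dots> \<le> M + (\<Sum>i\<in>UNIV. \<Sum>j\<in>UNIV. (p i - m i) * (q j - m j) / T * C)"
      using diag dC pm qm Tp
      by (intro add_mono sum_mono mult_left_mono) (auto intro!: divide_nonneg_pos mult_nonneg_nonneg)
    also have "(\<Sum>i\<in>UNIV. \<Sum>j\<in>UNIV. (p i - m i) * (q j - m j) / T * C)
        = (\<Sum>i\<in>UNIV. p i - m i) * (\<Sum>j\<in>UNIV. q j - m j) / T * C"
      by (simp add: sum_distrib_left sum_distrib_right sum_divide_distrib mult.assoc) (rule sum.swap)
    also have "\<dots> = C * T" using Tq Tp unfolding T_def[symmetric] by simp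
    finally show ?thesis using TV by simp
  qed
qed

theorem lemma5:
  fixes \<gamma> :: real
    and P P' :: "'s::finite \<Rightarrow> 'a::finite \<Rightarrow> 's \<Rightarrow> real"
    and R R' :: "'s \<Rightarrow> 'a \<Rightarrow> real"
  assumes "0 < \<gamma>" and "\<gamma> < 1"
    and "stochastic P" and "stochastic P'"
  shows "Max (range (\<lambda>s. dbar \<gamma> P P' R R' s s))
           \<le> 1 / (1 - \<gamma>) * Max (range (\<lambda>s. dTV \<gamma> P P' R R' s))"
proof -
  have g0: "0 < \<gamma>" and g1: "\<gamma> < 1" using assms by auto
  have P0: "\<forall>i. 0 \<le> P s a i" and P1: "sum (P s a) UNIV = 1"
    and P'0: "\<forall>i. 0 \<le> P' s a i" and P'1: "sum (P' s a) UNIV = 1" for s a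
    using assms(3,4) unfolding stochastic_def by auto
  have cne: "couplings (P s a) (P' s' a) \<noteq> {}" for s s' a
    using coup_prod[OF P0 P'0 P1 P'1] by blast
  have finR: "finite {\<bar>R si a - R' sj a\<bar> | si sj a. True}"
    by (rule finite_subset[of _ "(\<lambda>(si,sj,a). \<bar>R si a - R' sj a\<bar>) ` UNIV"])
      (auto intro!: image_eqI[where x="(_, _, _)"])
  have Rge: "\<bar>R si a - R' sj a\<bar> \<le> Rmax R R'" for si sj a
    unfolding Rmax_def by (rule Max_ge[OF finR]) blast
  define C where "C = Rmax R R' / (1 - \<gamma>)"
  have C0: "0 \<le> C" unfolding C_def using Rge[of undefined undefined undefined] g1
    by (intro divide_nonneg_pos) auto
  have Ceq: "Rmax R R' + \<gamma> * C = C" unfolding C_def using g1 by (simp add: field_simps)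
  define D where "D = Max (range (\<lambda>s. dTV \<gamma> P P' R R' s))"
  define E where "E = D / (1 - \<gamma>)"
  have TV0: "0 \<le> TV p q" for p q :: "'s \<Rightarrow> real" unfolding TV_def by (simp add: sum_nonneg)
  have termD: "\<bar>R s a - R' s a\<bar> + \<gamma> * Rmax R R' / (1 - \<gamma>) * TV (P s a) (P' s a) \<le> D" for s a
  proof -
    have "\<bar>R s a - R' s a\<bar> + \<gamma> * Rmax R R' / (1 - \<gamma>) * TV (P s a) (P' s a) \<le> dTV \<gamma> P P' R R' s"
      unfolding dTV_def by (rule Max_ge) auto
    also have "\<dots> \<le> D" unfolding D_def by (rule Max_ge) auto
    finally show ?thesis .
  qed
  have D0: "0 \<le> D"
  proof -
    have "0 \<le> \<bar>R s a - R' s a\<bar> + \<gamma> * Rmax R R' / (1 - \<gamma>) * TV (P s a) (P' s a)" for s a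
      using g0 g1 Rge[of s a s] TV0 by (intro add_nonneg_nonneg mult_nonneg_nonneg divide_nonneg_pos) auto
    thus ?thesis using termD[of undefined undefined] by (meson order_trans)
  qed
  have E0: "0 \<le> E" unfolding E_def using D0 g1 by simp
  have A: "\<forall>s s'. 0 \<le> dseq \<gamma> P P' R R' n s s' \<and> dseq \<gamma> P P' R R' n s s' \<le> C" for n
  proof (induction n)
    case 0
    then show ?case using C0 by simp
  next
    case (Suc n)
    show ?case
    proof (intro allI conjI)
      fix s s'
      let ?f = "\<lambda>a. \<bar>R s a - R' s' a\<bar> + \<gamma> * W1 (P s a) (P' s' a) (dseq \<gamma> P P' R R' n)"
      have W0: "0 \<le> W1 (P s a) (P' s' a) (dseq \<gamma> P P' R R' n)" for a
        using W1_nonneg[OF cne] Suc.IH by blast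
      have WC: "W1 (P s a) (P' s' a) (dseq \<gamma> P P' R R' n) \<le> C" for a
        using W1_prod_bound[OF P0 P'0 P1 P'1] Suc.IH by blast
      have "0 \<le> ?f undefined" using W0 g0 by simp
      also have "?f undefined \<le> Max (range ?f)" by (rule Max_ge) auto
      finally show "0 \<le> dseq \<gamma> P P' R R' (Suc n) s s'" by simp
      have "?f a \<le> C" for a
      proof -
        have "?f a \<le> Rmax R R' + \<gamma> * C"
          using Rge[of s a s'] WC[of a] g0 by (intro add_mono mult_left_mono) auto
        thus ?thesis using Ceq by simp
      qed
      hence "Max (range ?f) \<le> C" by (subst Max_le_iff) auto
      thus "dseq \<gamma> P P' R R' (Suc n) s s' \<le> C" by simp
    qed
  qed
  have B: "\<forall>s. dseq \<gamma> P P' R R' n s s \<le> E" for n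
  proof (induction n)
    case 0
    then show ?case using E0 by simp
  next
    case (Suc n)
    show ?case
    proof
      fix s
      let ?f = "\<lambda>a. \<bar>R s a - R' s a\<bar> + \<gamma> * W1 (P s a) (P' s a) (dseq \<gamma> P P' R R' n)"
      have "?f a \<le> E" for a
      proof -
        have "W1 (P s a) (P' s a) (dseq \<gamma> P P' R R' n) \<le> E + C * TV (P s a) (P' s a)"
          using W1_max_coup[OF P0 P'0 P1 P'1 _ _ E0, of "dseq \<gamma> P P' R R' n" C] A Suc.IH by blast
        hence "?f a \<le> \<bar>R s a - R' s a\<bar> + \<gamma> * (E + C * TV (P s a) (P' s a))"
          using g0 by simp
        also have "\<dots> = (\<bar>R s a - R' s a\<bar> + \<gamma> * Rmax R R' / (1 - \<gamma>) * TV (P s a) (P' s a)) + \<gamma> * E"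
          unfolding C_def by (simp add: algebra_simps)
        also have "\<dots> \<le> D + \<gamma> * E" using termD by simp
        also have "\<dots> = E" unfolding E_def using g1 by (simp add: field_simps)
        finally show ?thesis .
      qed
      hence "Max (range ?f) \<le> E" by (subst Max_le_iff) auto
      thus "dseq \<gamma> P P' R R' (Suc n) s s \<le> E" by simp
    qed
  qed
  have Mo: "\<forall>s s'. dseq \<gamma> P P' R R' n s s' \<le> dseq \<gamma> P P' R R' (Suc n) s s'" for n
  proof (induction n)
    case 0
    then show ?case using A[of "Suc 0"] by simp
  next
    case (Suc n)
    show ?case
    proof (intro allI)
      fix s s'
      let ?f = "\<lambda>a. \<bar>R s a - R' s' a\<bar> + \<gamma> * W1 (P s a) (P' s' a) (dseq \<gamma> P P' R R' n)"
      let ?g = "\<lambda>a. \<bar>R s a - R' s' a\<bar> + \<gamma> * W1 (P s a) (P' s' a) (dseq \<gamma> P P' R R' (Suc n))"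
      have "?f a \<le> ?g a" for a
        using W1_mono[OF cne, of "dseq \<gamma> P P' R R' n" "dseq \<gamma> P P' R R' (Suc n)"] A Suc.IH g0
        by (intro add_left_mono mult_left_mono) auto
      moreover have "?g a \<le> Max (range ?g)" for a by (rule Max_ge) auto
      ultimately have "?f a \<le> Max (range ?g)" for a by (meson order_trans)
      hence "Max (range ?f) \<le> Max (range ?g)"
        by (subst Max_le_iff) auto
      thus "dseq \<gamma> P P' R R' (Suc n) s s' \<le> dseq \<gamma> P P' R R' (Suc (Suc n)) s s'" by simp
    qed
  qed
  have lim: "dbar \<gamma> P P' R R' s s \<le> E" for s
  proof -
    let ?X = "\<lambda>n. dseq \<gamma> P P' R R' n s s"
    have inc: "incseq ?X" using Mo by (intro incseq_SucI) blast
    have bdd: "bdd_above (range ?X)" using B by (intro bdd_aboveI[of _ E]) auto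
    have "?X \<longlonglongrightarrow> (SUP i. ?X i)" by (rule LIMSEQ_incseq_SUP[OF bdd inc])
    hence "dbar \<gamma> P P' R R' s s = (SUP i. ?X i)" unfolding dbar_def by (rule limI)
    also have "\<dots> \<le> E" using B by (intro cSUP_least) auto
    finally show ?thesis .
  qed
  have "Max (range (\<lambda>s. dbar \<gamma> P P' R R' s s)) \<le> E"
    using lim by (subst Max_le_iff) auto
  thus ?thesis unfolding E_def D_def by simp
qed

end
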